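(* Let $a_k=\ln(k\ln^2k)$ for $k\ge3$ (the coupon weights being $a_3,a_4,\dots$). Then $\lim_{N\to\infty}E[U_j^N]=\infty$ for all $j\ge2$.
   Context: For $N\ge3$ there are coupon types $k\in\{3,\dots,N\}$ with probabilities $a_k/\sum_{i=3}^Na_i$; $U_j^N$ is the number of empty album places of the $j$-th collector when the first collector completes her set (each collector passes duplicates to the next one), with $$E[U_j^N]=\sum_{k=3}^N\int_0^\infty a_k e^{-a_k t}\frac{(a_kt)^{j-1}}{(j-1)!}\prod_{i\ne k,\,3\le i\le N}\big(1-e^{-a_i t}\big)\,dt.$$ *)

theory Defs
  imports "HOL-Analysis.Analysis"
begin

definition coupon_a :: "nat \<Rightarrow> real" where
  "coupon_a k = ln (real k * (ln (real k))^2)"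

text \<open>E[U_j^N] as given by the integral formula in the paper, for weights a
  (types k = 3..N).  The integrand is nonnegative, so we use the
  nonnegative (extended-real-valued) Lebesgue integral over [0, infinity).\<close>
definition EU :: "(nat \<Rightarrow> real) \<Rightarrow> nat \<Rightarrow> nat \<Rightarrow> ennreal" where
  "EU a N j = (\<Sum>k\<in>{3..N}. \<integral>\<^sup>+ t \<in> {0..}.
      ennreal (a k * exp (- a k * t) * (a k * t) ^ (j - 1) / fact (j - 1)
        * (\<Prod>i\<in>{3..N} - {k}. 1 - exp (- a i * t))) \<partial>lborel)"

end

theory Submission imports Defs "HOL-Real_Asymp.Real_Asymp" begin

lemma ln_ge1: "3 \<le> x \<Longrightarrow> 1 \<le> ln (x::real)"
proof -
  assume "3 \<le> x"
  then have "exp 1 \<le> x" using exp_le by linarith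
  then have "ln (exp 1) \<le> ln x" by (intro ln_mono) auto
  then show ?thesis by simp
qed

lemma a_ge_ln: assumes "3 \<le> k" shows "ln (real k) \<le> coupon_a k"
proof -
  have k: "3 \<le> real k" using assms by simp
  have l: "1 \<le> ln (real k)" using ln_ge1[OF k] .
  have "real k \<le> real k * (ln (real k))^2"
    using k l by (simp add: one_le_power)
  then show ?thesis unfolding coupon_a_def using k by (simp add: ln_mono)
qed

lemma a_ge1: "3 \<le> k \<Longrightarrow> 1 \<le> coupon_a k"
proof -
  assume "3 \<le> k"
  then show ?thesis using a_ge_ln[of k] ln_ge1[of "real k"] by simp
qed

lemma exp_neg_a: assumes "3 \<le> k" shows "exp (- coupon_a k) = 1 / (real k * (ln (real k))^2)"
proof -
  have k: "3 \<le> real k" using assms by simp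
  have "0 < real k * (ln (real k))^2" using k ln_ge1[OF k] by simp
  then show ?thesis unfolding coupon_a_def by (simp add: exp_minus inverse_eq_divide)
qed

lemma step1: assumes "3 \<le> m" shows "1 / (m * (ln m)^2) \<le> 1 / ln (m - 1) - 1 / ln (m::real)"
proof -
  have l2: "0 < ln (m-1)" using assms by simp
  have lm: "ln (m-1) \<le> ln m" using assms by simp
  have "ln ((m-1)/m) \<le> (m-1)/m - 1" using assms by (intro ln_le_minus_one) simp
  also have "(m-1)/m - 1 = - 1/m" using assms by (simp add: field_simps)
  finally have d: "1/m \<le> ln m - ln (m-1)" using assms by (simp add: ln_div)
  have "1 / (m * (ln m)^2) = (1/m) / (ln m * ln m)" by (simp add: power2_eq_square)
  also have "\<dots> \<le> (ln m - ln (m-1)) / (ln m * ln m)"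
    using d l2 lm by (intro divide_right_mono) auto
  also have "\<dots> \<le> (ln m - ln (m-1)) / (ln (m-1) * ln m)"
    using d l2 lm assms by (intro divide_left_mono mult_right_mono mult_pos_pos) auto
  also have "\<dots> = 1 / ln (m - 1) - 1 / ln m" using l2 lm by (simp add: field_simps)
  finally show ?thesis .
qed

lemma sum_bound: "2 \<le> N \<Longrightarrow> (\<Sum>i=3..N. 1 / (real i * (ln (real i))^2)) \<le> 1 / ln 2 - 1 / ln (real N)"
proof (induction N rule: dec_induct)
  case base then show ?case by simp
next
  case (step n)
  have "(\<Sum>i=3..Suc n. 1 / (real i * (ln (real i))^2)) = (\<Sum>i=3..n. 1 / (real i * (ln (real i))^2)) + 1 / (real (Suc n) * (ln (real (Suc n)))^2)"
    using step by (simp add: sum.cl_ivl_Suc)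
  also have "\<dots> \<le> 1 / ln 2 - 1 / ln (real n) + (1 / ln (real (Suc n) - 1) - 1 / ln (real (Suc n)))"
    using step.IH step1[of "real (Suc n)"] step.hyps by (intro add_mono) auto
  finally show ?case by simp
qed

lemma step2: assumes "3 \<le> x" shows "ln (ln (x+1)) - ln (ln x) \<le> 1 / (x * ln (x::real))"
proof -
  have l: "1 \<le> ln x" using ln_ge1 assms by simp
  have l1: "ln x \<le> ln (x+1)" using assms by simp
  have "ln (ln (x+1)) - ln (ln x) = ln (ln (x+1) / ln x)" using l l1 by (simp add: ln_div)
  also have "\<dots> \<le> ln (x+1) / ln x - 1" using l l1 by (intro ln_le_minus_one) simp
  also have "\<dots> = (ln (x+1) - ln x) / ln x" using l by (simp add: field_simps)
  also have "ln (x+1) - ln x = ln ((x+1)/x)" using assms by (simp add: ln_div)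
  also have "ln ((x+1)/x) \<le> (x+1)/x - 1" using assms by (intro ln_le_minus_one) simp
  also have "(x+1)/x - 1 = 1/x" using assms by (simp add: field_simps)
  finally show ?thesis using l by (simp add: divide_right_mono)
qed

lemma div_sum: "2 \<le> N \<Longrightarrow> ln (ln (real N + 1)) - ln (ln 3) \<le> (\<Sum>k=3..N. 1 / (real k * ln (real k)))"
proof (induction N rule: dec_induct)
  case base then show ?case by simp
next
  case (step n)
  have "(\<Sum>k=3..Suc n. 1 / (real k * ln (real k))) = (\<Sum>k=3..n. 1 / (real k * ln (real k))) + 1 / (real (Suc n) * ln (real (Suc n)))"
    using step by (simp add: sum.cl_ivl_Suc)
  moreover have "ln (ln (real (Suc n) + 1)) - ln (ln (real (Suc n))) \<le> 1 / (real (Suc n) * ln (real (Suc n)))"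
    using step.hyps by (intro step2) simp
  ultimately show ?case using step.IH by (simp add: add.commute)
qed

lemma fac_bound: assumes "1 \<le> t" "3 \<le> i"
  shows "exp (- 2 * exp (- coupon_a i * t)) \<le> 1 - exp (- coupon_a i * t)"
proof -
  define x where "x = exp (- coupon_a i * t)"
  have a1: "1 \<le> coupon_a i" using a_ge1 assms by simp
  have "1 * 1 \<le> coupon_a i * t" using a1 assms(1) by (intro mult_mono) auto
  then have "x \<le> exp (-1)" unfolding x_def by simp
  also have "exp (-1) \<le> (1/2::real)"
  proof -
    have "2 \<le> exp (1::real)" using exp_ge_add_one_self[of 1] by simp
    then show ?thesis by (simp add: exp_minus field_simps)
  qed
  finally have x2: "x \<le> 1/2" .
  have x0: "0 \<le> x" unfolding x_def by simp
  have "x * (2 * x) \<le> x * 1" using x0 x2 by (intro mult_left_mono) auto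
  then have "- 2 * x \<le> - x - 2 * x^2" by (simp add: power2_eq_square)
  also have "\<dots> \<le> ln (1 - x)" using ln_one_minus_pos_lower_bound x0 x2 by blast
  finally have "exp (- 2 * x) \<le> exp (ln (1 - x))" by simp
  also have "\<dots> = 1 - x" using x2 by simp
  finally show ?thesis unfolding x_def .
qed

lemma prod_bound: assumes "1 \<le> t"
  shows "exp (- 2 / ln 2) \<le> (\<Prod>i\<in>{3..N} - {k}. 1 - exp (- coupon_a i * t))"
proof -
  let ?x = "\<lambda>i. exp (- coupon_a i * t)"
  have "(\<Sum>i\<in>{3..N} - {k}. ?x i) \<le> (\<Sum>i\<in>{3..N}. ?x i)"
    by (intro sum_mono2) auto
  also have "\<dots> \<le> (\<Sum>i=3..N. 1 / (real i * (ln (real i))^2))"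
  proof (intro sum_mono)
    fix i assume "i \<in> {3..N}"
    then have i: "3 \<le> i" by simp
    have "coupon_a i \<le> coupon_a i * t" using a_ge1[OF i] assms by simp
    then have "?x i \<le> exp (- coupon_a i)" by simp
    then show "?x i \<le> 1 / (real i * (ln (real i))^2)" using exp_neg_a[OF i] by simp
  qed
  also have "\<dots> \<le> 1 / ln 2"
  proof (cases "2 \<le> N")
    case True
    have "0 \<le> 1 / ln (real N)" using True by simp
    then show ?thesis using sum_bound[OF True] by linarith
  next
    case False
    then have "{3..N} = {}" by auto
    then show ?thesis by simp
  qed
  finally have s: "(\<Sum>i\<in>{3..N} - {k}. ?x i) \<le> 1 / ln 2" .
  have "exp (- 2 / ln 2) \<le> exp (\<Sum>i\<in>{3..N} - {k}. - 2 * ?x i)"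
  proof -
    have "(\<Sum>i\<in>{3..N} - {k}. - 2 * ?x i) = - 2 * (\<Sum>i\<in>{3..N} - {k}. ?x i)"
      by (simp add: sum_distrib_left)
    also have "- 2 / ln 2 \<le> \<dots>" using s by simp
    finally show ?thesis by simp
  qed
  also have "\<dots> = (\<Prod>i\<in>{3..N} - {k}. exp (- 2 * ?x i))" by (simp add: exp_sum)
  also have "\<dots> \<le> (\<Prod>i\<in>{3..N} - {k}. 1 - ?x i)"
  proof (intro prod_mono conjI)
    fix i assume "i \<in> {3..N} - {k}"
    then have "3 \<le> i" by simp
    then show "exp (- 2 * ?x i) \<le> 1 - ?x i" using fac_bound[OF assms] by blast
  qed simp
  finally show ?thesis .
qed

definition Cj :: "nat \<Rightarrow> real" where
  "Cj j = exp (- 2 / ln 2) * exp (- 1) / fact (j - 1)"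

lemma Cj_pos: "0 < Cj j" unfolding Cj_def by simp

lemma term_bound:
  assumes k: "3 \<le> k" and j: "2 \<le> j"
  shows "ennreal (Cj j / (real k * ln (real k))) \<le> (\<integral>\<^sup>+ t \<in> {0..}.
      ennreal (coupon_a k * exp (- coupon_a k * t) * (coupon_a k * t) ^ (j - 1) / fact (j - 1)
        * (\<Prod>i\<in>{3..N} - {k}. 1 - exp (- coupon_a i * t))) \<partial>lborel)"
proof -
  define a where "a = coupon_a k"
  have a1: "1 \<le> a" unfolding a_def using a_ge1[OF k] .
  define F where "F = (\<lambda>t. a * exp (- a * t) * (a * t) ^ (j - 1) / fact (j - 1)
        * (\<Prod>i\<in>{3..N} - {k}. 1 - exp (- coupon_a i * t)))"
  define L where "L = a * exp (- a - 1) * a / fact (j - 1) * exp (- 2 / ln 2)"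
  define S where "S = {1..1 + 1/a}"
  have pt: "L \<le> F t" if tS: "t \<in> S" for t
  proof -
    have t1: "1 \<le> t" and t2: "t \<le> 1 + 1/a" using tS unfolding S_def by auto
    have "a * t \<le> a * (1 + 1/a)" using t2 a1 by (intro mult_left_mono) auto
    also have "\<dots> = a + 1" using a1 by (simp add: field_simps)
    finally have at: "a * t \<le> a + 1" .
    have e: "exp (- a - 1) \<le> exp (- a * t)" using at by simp
    have aat: "a \<le> a * t" using a1 t1 by simp
    have "a * t \<le> (a * t) ^ (j - 1)" using a1 aat j by (intro self_le_power) (linarith, simp)
    then have p: "a \<le> (a * t) ^ (j - 1)" using aat by linarith
    have P: "exp (- 2 / ln 2) \<le> (\<Prod>i\<in>{3..N} - {k}. 1 - exp (- coupon_a i * t))"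
      using prod_bound[OF t1] .
    have X: "a * exp (- a - 1) * a / fact (j - 1) \<le> a * exp (- a * t) * (a * t) ^ (j - 1) / fact (j - 1)"
      using a1 e p by (intro divide_right_mono mult_mono mult_left_mono) auto
    show ?thesis unfolding L_def F_def
      using X P a1 t1 by (intro mult_mono) auto
  qed
  have "Cj j / (real k * ln (real k)) \<le> L / a"
  proof -
    have kk: "3 \<le> real k" using k by simp
    have lk: "1 \<le> ln (real k)" using ln_ge1[OF kk] .
    have "L / a = Cj j * (a * exp (- a))"
      unfolding L_def Cj_def using a1 by (simp add: exp_diff exp_minus field_simps)
    also have "a * exp (- a) = a / (real k * (ln (real k))^2)"
      unfolding a_def using exp_neg_a[OF k] by simp
    finally have LL: "L / a = Cj j * (a / (real k * (ln (real k))^2))" .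
    have "1 / (real k * ln (real k)) = ln (real k) / (real k * (ln (real k))^2)"
      using lk kk by (simp add: power2_eq_square)
    also have "\<dots> \<le> a / (real k * (ln (real k))^2)"
      unfolding a_def using a_ge_ln[OF k] kk lk by (intro divide_right_mono) auto
    finally have "Cj j * (1 / (real k * ln (real k))) \<le> Cj j * (a / (real k * (ln (real k))^2))"
      using Cj_pos[of j] by (intro mult_left_mono) auto
    then show ?thesis using LL by simp
  qed
  then have "ennreal (Cj j / (real k * ln (real k))) \<le> ennreal (L / a)" by (rule ennreal_leI)
  also have "ennreal (L / a) = ennreal L * emeasure lborel S"
  proof -
    have "emeasure lborel S = ennreal (1 / a)" unfolding S_def using a1 by simp
    moreover have "0 \<le> L" unfolding L_def using a1 by simp
    ultimately show ?thesis using a1 by (simp add: ennreal_mult[symmetric] divide_inverse)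
  qed
  also have "\<dots> = (\<integral>\<^sup>+ t \<in> S. ennreal L \<partial>lborel)"
    by (rule nn_integral_cmult_indicator[symmetric]) (simp add: S_def)
  also have "\<dots> \<le> (\<integral>\<^sup>+ t \<in> {0..}. ennreal (F t) \<partial>lborel)"
  proof (intro nn_integral_mono)
    fix t
    show "ennreal L * indicator S t \<le> ennreal (F t) * indicator {0..} t"
    proof (cases "t \<in> S")
      case True
      then have "0 \<le> t" unfolding S_def by auto
      then show ?thesis using True pt[OF True] by (simp add: ennreal_leI)
    qed simp
  qed
  finally show ?thesis unfolding F_def a_def .
qed

theorem mainTheorem14:
  fixes j :: nat
  assumes "j \<ge> 2"
  shows "((\<lambda>N. EU coupon_a N j) \<longlongrightarrow> \<infinity>) sequentially"
proof -
  have lower: "ennreal (Cj j * (ln (ln (real N + 1)) - ln (ln 3))) \<le> EU coupon_a N j"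
    if N: "3 \<le> N" for N
  proof -
    have "Cj j * (ln (ln (real N + 1)) - ln (ln 3)) \<le> Cj j * (\<Sum>k=3..N. 1 / (real k * ln (real k)))"
      using div_sum[of N] N Cj_pos[of j] by (intro mult_left_mono) auto
    also have "\<dots> = (\<Sum>k=3..N. Cj j / (real k * ln (real k)))"
      by (simp add: sum_distrib_left)
    finally have "ennreal (Cj j * (ln (ln (real N + 1)) - ln (ln 3))) \<le> ennreal (\<Sum>k=3..N. Cj j / (real k * ln (real k)))"
      by (rule ennreal_leI)
    also have "\<dots> = (\<Sum>k=3..N. ennreal (Cj j / (real k * ln (real k))))"
    proof (rule sum_ennreal[symmetric])
      fix k assume "k \<in> {3..N}"
      then have "3 \<le> real k" by simp
      then have "0 \<le> ln (real k)" by simp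
      then show "0 \<le> Cj j / (real k * ln (real k))" using Cj_pos[of j] by simp
    qed
    also have "\<dots> \<le> EU coupon_a N j"
      unfolding EU_def using assms by (intro sum_mono term_bound) auto
    finally show ?thesis .
  qed
  have g: "filterlim (\<lambda>N::nat. ln (ln (real N + 1)) - ln (ln 3)) at_top sequentially"
    by real_asymp
  have lim: "filterlim (\<lambda>N::nat. Cj j * (ln (ln (real N + 1)) - ln (ln 3))) at_top sequentially"
    by (rule filterlim_tendsto_pos_mult_at_top[OF tendsto_const Cj_pos g])
  show ?thesis
    unfolding infinity_ennreal_def
  proof (rule tendsto_top_iff_ennreal[THEN iffD2], intro allI impI)
    fix l :: real assume l: "0 \<le> l"
    have "eventually (\<lambda>N. l + 1 < Cj j * (ln (ln (real N + 1)) - ln (ln 3))) sequentially"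
      using lim by (simp add: filterlim_at_top_dense)
    moreover have "eventually (\<lambda>N::nat. 3 \<le> N) sequentially" by (rule eventually_ge_at_top)
    ultimately show "eventually (\<lambda>N. ennreal l < EU coupon_a N j) sequentially"
    proof eventually_elim
      case (elim N)
      have "ennreal l < ennreal (Cj j * (ln (ln (real N + 1)) - ln (ln 3)))"
        using elim l by (intro ennreal_lessI) auto
      also have "\<dots> \<le> EU coupon_a N j" using lower elim by simp
      finally show ?case .
    qed
  qed
qed
end
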